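(* Let $(M,A)$ be a $d$-dimensional BUT-manifold. Suppose $M$ is covered by a family $\mathcal F$ of $d+2$ closed subsets $C_1,\ldots,C_{d+2}$ such that $C_i\cap A(C_i)=\emptyset$ for all $i$. Let $0<k<d+2$. Then any $k$ of the subsets in $\mathcal F$ have nonempty intersection, and moreover there is a point $x$ in this intersection such that $A(x)$ belongs to the intersection of the remaining $d+2-k$ subsets of $\mathcal F$.
   Context: A BUT (Borsuk–Ulam type) manifold is a pair $(M,A)$ where $M$ is a connected compact piecewise-linear $d$-dimensional manifold without boundary and $A:M\to M$ is a free simplicial involution ($A(A(x))=x$, $A(x)\neq x$), such that for every continuous $g:M\to\mathbb{R}^d$ there is $x\in M$ with $g(A(x))=g(x)$. *)

theory Defs
  imports "HOL-Analysis.Analysis"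
begin

definition affine_on :: "'a::real_vector set \<Rightarrow> ('a \<Rightarrow> 'b::real_vector) \<Rightarrow> bool" where
  "affine_on S f \<longleftrightarrow>
     (\<forall>x\<in>S. \<forall>y\<in>S. \<forall>u::real. 0 \<le> u \<and> u \<le> 1 \<longrightarrow>
        f ((1 - u) *\<^sub>R x + u *\<^sub>R y) = (1 - u) *\<^sub>R f x + u *\<^sub>R f y)"

definition polyhedron :: "'a::euclidean_space set \<Rightarrow> bool" where
  "polyhedron P \<longleftrightarrow> (\<exists>K. simplicial_complex K \<and> \<Union>K = P)"

definition PL_homeomorphism ::
  "'a::euclidean_space set \<Rightarrow> 'b::euclidean_space set \<Rightarrow> ('a \<Rightarrow> 'b) \<Rightarrow> bool" where
  "PL_homeomorphism P Q h \<longleftrightarrow>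
     (\<exists>h'. homeomorphism P Q h h') \<and>
     (\<exists>K. simplicial_complex K \<and> \<Union>K = P \<and> (\<forall>S\<in>K. affine_on S h))"

text \<open>The type 'd plays the role of R^d.\<close>
definition PL_manifold_without_boundary :: "'d::euclidean_space itself \<Rightarrow> 'a::euclidean_space set \<Rightarrow> bool" where
  "PL_manifold_without_boundary TYPE('d) M \<longleftrightarrow>
     polyhedron M \<and>
     (\<forall>x\<in>M. \<exists>N U (h::'a \<Rightarrow> 'd). N \<subseteq> M \<and> openin (top_of_set M) U \<and> x \<in> U \<and> U \<subseteq> N \<and>
        PL_homeomorphism N (cbox 0 One) h \<and> h x \<in> box 0 One)"

definition free_simplicial_involution :: "'a::euclidean_space set \<Rightarrow> ('a \<Rightarrow> 'a) \<Rightarrow> bool" where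
  "free_simplicial_involution M A \<longleftrightarrow>
     A ` M \<subseteq> M \<and> (\<forall>x\<in>M. A (A x) = x \<and> A x \<noteq> x) \<and>
     (\<exists>K. simplicial_complex K \<and> \<Union>K = M \<and> (\<forall>S\<in>K. A ` S \<in> K \<and> affine_on S A))"

definition BUT_manifold :: "'d::euclidean_space itself \<Rightarrow> 'a::euclidean_space set \<Rightarrow> ('a \<Rightarrow> 'a) \<Rightarrow> bool" where
  "BUT_manifold TYPE('d) M A \<longleftrightarrow>
     connected M \<and> compact M \<and> PL_manifold_without_boundary TYPE('d) M \<and>
     free_simplicial_involution M A \<and>
     (\<forall>g::'a \<Rightarrow> 'd. continuous_on M g \<longrightarrow> (\<exists>x\<in>M. g (A x) = g x))"

end

theory Submission
  imports Defs
begin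

lemma affine_on_subset: "affine_on S f \<Longrightarrow> T \<subseteq> S \<Longrightarrow> affine_on T f"
  unfolding affine_on_def by blast

lemma affine_on_agree:
  fixes f L :: "'a::euclidean_space \<Rightarrow> 'b::real_vector"
  assumes "finite C"
  shows "affine_on (convex hull C) f \<Longrightarrow> affine_on (convex hull C) L \<Longrightarrow> (\<forall>c\<in>C. f c = L c)
     \<Longrightarrow> (\<forall>x\<in>convex hull C. f x = L x)"
  using assms
proof (induction C rule: finite_induct)
  case empty
  then show ?case by simp
next
  case (insert a C)
  show ?case
  proof (cases "C = {}")
    case True
    then show ?thesis using insert by simp
  next
    case False
    have sub: "convex hull C \<subseteq> convex hull (insert a C)" by (simp add: hull_mono subset_insertI)
    have IH: "\<forall>x\<in>convex hull C. f x = L x"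
      using insert.IH insert.prems affine_on_subset[OF _ sub] by auto
    have ain: "a \<in> convex hull (insert a C)" by (simp add: hull_inc)
    show ?thesis
    proof
      fix x assume "x \<in> convex hull (insert a C)"
      then obtain u v b where uv: "u \<ge> 0" "v \<ge> 0" "u + v = 1" "b \<in> convex hull C" "x = u *\<^sub>R a + v *\<^sub>R b"
        using convex_hull_insert[OF False] by auto
      have bin: "b \<in> convex hull (insert a C)" using uv(4) sub by auto
      have x: "x = (1 - v) *\<^sub>R a + v *\<^sub>R b" using uv by simp
      have "f x = (1 - v) *\<^sub>R f a + v *\<^sub>R f b"
        using insert.prems(1) ain bin uv unfolding affine_on_def x by auto
      moreover have "L x = (1 - v) *\<^sub>R L a + v *\<^sub>R L b"
        using insert.prems(2) ain bin uv unfolding affine_on_def x by auto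
      ultimately show "f x = L x" using IH uv(4) insert.prems(3) by simp
    qed
  qed
qed

lemma simplex_affine_continuous:
  fixes f :: "'a::euclidean_space \<Rightarrow> 'b::euclidean_space"
  assumes "n simplex S" "affine_on S f"
  shows "continuous_on S f"
proof -
  obtain C where C: "finite C" "\<not> affine_dependent C" "S = convex hull C"
    using assms(1) unfolding simplex by auto
  show ?thesis
  proof (cases "C = {}")
    case True then show ?thesis using C by simp
  next
    case False
    then obtain a where a: "a \<in> C" by auto
    have ind: "\<not> dependent ((\<lambda>x. -a + x) ` (C - {a}))"
      using affine_dependent_iff_dependent2[OF a] C(2) by simp
    obtain g where g: "linear g" "\<forall>y\<in>(\<lambda>x. -a + x) ` (C - {a}). g y = f (y + a) - f a"
      using linear_independent_extend[OF ind, of "\<lambda>y. f (y + a) - f a"] by auto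
    define L where "L x = f a + g (x - a)" for x
    have Lc: "\<forall>c\<in>C. f c = L c"
    proof
      fix c assume "c \<in> C"
      show "f c = L c"
      proof (cases "c = a")
        case True then show ?thesis by (simp add: L_def linear_0[OF g(1)])
      next
        case False
        then have "-a + c \<in> (\<lambda>x. -a + x) ` (C - {a})" using \<open>c \<in> C\<close> by auto
        then have "g (-a + c) = f (-a + c + a) - f a" using g(2) by blast
        then show ?thesis by (simp add: L_def algebra_simps)
      qed
    qed
    have La: "affine_on (convex hull C) L"
      unfolding affine_on_def L_def
    proof (intro ballI allI impI)
      fix x y and u :: real
      have "g ((1 - u) *\<^sub>R x + u *\<^sub>R y - a) = (1 - u) *\<^sub>R g (x - a) + u *\<^sub>R g (y - a)"
      proof -
        have "(1 - u) *\<^sub>R x + u *\<^sub>R y - a = (1 - u) *\<^sub>R (x - a) + u *\<^sub>R (y - a)"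
          by (simp add: algebra_simps)
        then show ?thesis using g(1) by (simp add: linear_add linear_cmul)
      qed
      then show "f a + g ((1 - u) *\<^sub>R x + u *\<^sub>R y - a) =
          (1 - u) *\<^sub>R (f a + g (x - a)) + u *\<^sub>R (f a + g (y - a))"
        by (simp add: algebra_simps)
    qed
    have eq: "\<forall>x\<in>S. f x = L x"
      using affine_on_agree[OF C(1)] assms(2) La Lc C(3) by auto
    have "continuous_on S L" unfolding L_def
      by (intro continuous_intros linear_continuous_on_compose[OF _ g(1)]) 
    then show ?thesis using eq continuous_on_cong by blast
  qed
qed


theorem theorem4p2:
  fixes M :: "'a::euclidean_space set" and A :: "'a \<Rightarrow> 'a"
    and C :: "nat \<Rightarrow> 'a set" and k :: nat
  assumes "BUT_manifold TYPE('d::euclidean_space) M A"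
    and "\<And>i. i \<in> {1..DIM('d) + 2} \<Longrightarrow> closedin (top_of_set M) (C i)"
    and "(\<Union>i\<in>{1..DIM('d) + 2}. C i) = M"
    and "\<And>i. i \<in> {1..DIM('d) + 2} \<Longrightarrow> C i \<inter> A ` (C i) = {}"
    and "0 < k" and "k < DIM('d) + 2"
  shows "\<forall>I. I \<subseteq> {1..DIM('d) + 2} \<and> card I = k \<longrightarrow>
           (\<Inter>i\<in>I. C i) \<noteq> {} \<and>
           (\<exists>x\<in>M. (\<forall>i\<in>I. x \<in> C i) \<and> (\<forall>i\<in>{1..DIM('d) + 2} - I. A x \<in> C i))"
proof (intro allI impI)
  fix I assume I: "I \<subseteq> {1..DIM('d) + 2} \<and> card I = k"
  define N where "N = DIM('d) + 2"
  define J where "J = {1..N} - I"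
  have cM: "compact M" and AM: "A ` M \<subseteq> M" and inv: "\<And>x. x \<in> M \<Longrightarrow> A (A x) = x"
    and BUT: "\<And>g::'a \<Rightarrow> 'd. continuous_on M g \<Longrightarrow> \<exists>x\<in>M. g (A x) = g x"
    using assms(1) unfolding BUT_manifold_def free_simplicial_involution_def by auto
  obtain K where K: "simplicial_complex K" "\<Union>K = M" "\<forall>S\<in>K. affine_on S A"
    using assms(1) unfolding BUT_manifold_def free_simplicial_involution_def by auto
  have contA: "continuous_on M A"
  proof -
    have "continuous_on (\<Union>S\<in>K. S) A"
    proof (rule continuous_on_closed_Union)
      show "finite K" using K(1) unfolding simplicial_complex_def by auto
      fix S assume S: "S \<in> K"
      then obtain n where n: "n simplex S" using K(1) unfolding simplicial_complex_def by auto
      then obtain Cs where "finite Cs" "S = convex hull Cs" unfolding simplex by auto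
      then show "closed S" by (simp add: compact_imp_closed finite_imp_compact_convex_hull)
      show "continuous_on S A" using simplex_affine_continuous[OF n] K(3) S by auto
    qed
    then show ?thesis using K(2) by simp
  qed
  have clC: "\<And>l. l \<in> {1..N} \<Longrightarrow> closed (C l)"
    using assms(2) closedin_closed_trans compact_imp_closed[OF cM] unfolding N_def by blast
  have disj: "\<And>l x. l \<in> {1..N} \<Longrightarrow> x \<in> C l \<Longrightarrow> A x \<notin> C l"
    using assms(4) unfolding N_def by blast
  have CM: "\<And>l. l \<in> {1..N} \<Longrightarrow> C l \<subseteq> M" using assms(3) unfolding N_def by blast
  define f where "f l x = (if C l = {} then 1 else infdist x (C l))" for l x
  define u where "u l x = f l x / (f l x + f l (A x))" for l x
  have f0: "\<And>l x. f l x \<ge> 0" unfolding f_def by (simp add: infdist_nonneg)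
  have fz: "\<And>l x. l \<in> {1..N} \<Longrightarrow> f l x = 0 \<longleftrightarrow> x \<in> C l"
    unfolding f_def using in_closed_iff_infdist_zero clC by auto
  have fpos: "\<And>l x. l \<in> {1..N} \<Longrightarrow> x \<in> M \<Longrightarrow> f l x + f l (A x) > 0"
  proof -
    fix l x assume l: "l \<in> {1..N}" and x: "x \<in> M"
    have "\<not> (f l x = 0 \<and> f l (A x) = 0)" using fz[OF l] disj[OF l] by blast
    then show "f l x + f l (A x) > 0" using f0[of l x] f0[of l "A x"] by linarith
  qed
  have uA: "\<And>l x. l \<in> {1..N} \<Longrightarrow> x \<in> M \<Longrightarrow> u l (A x) = 1 - u l x"
  proof -
    fix l x assume l: "l \<in> {1..N}" and x: "x \<in> M"
    have d: "f l x + f l (A x) \<noteq> 0" using fpos[OF l x] by simp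
    show "u l (A x) = 1 - u l x" unfolding u_def inv[OF x] using d
      by (simp add: field_simps)
  qed
  have u0: "\<And>l x. l \<in> {1..N} \<Longrightarrow> x \<in> M \<Longrightarrow> u l x = 0 \<longleftrightarrow> x \<in> C l"
  proof -
    fix l x assume l: "l \<in> {1..N}" and x: "x \<in> M"
    have d: "f l x + f l (A x) > 0" using fpos[OF l x] by simp
    show "u l x = 0 \<longleftrightarrow> x \<in> C l" unfolding u_def using d fz[OF l] by simp
  qed
  have u1: "\<And>l x. l \<in> {1..N} \<Longrightarrow> x \<in> M \<Longrightarrow> u l x = 1 \<longleftrightarrow> A x \<in> C l"
  proof -
    fix l x assume l: "l \<in> {1..N}" and x: "x \<in> M"
    have "A x \<in> M" using AM x by auto
    then have "u l (A x) = 0 \<longleftrightarrow> A x \<in> C l" using u0[OF l] by simp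
    then show "u l x = 1 \<longleftrightarrow> A x \<in> C l" using uA[OF l x] by linarith
  qed
  have ucont: "\<And>l. l \<in> {1..N} \<Longrightarrow> continuous_on M (u l)"
  proof -
    fix l assume l: "l \<in> {1..N}"
    have cf: "continuous_on M (f l)"
      unfolding f_def by (cases "C l = {}") (auto intro!: continuous_intros)
    have cfA: "continuous_on M (\<lambda>x. f l (A x))"
      using continuous_on_compose2[OF cf contA AM] .
    show "continuous_on M (u l)" unfolding u_def
      using fpos[OF l] by (intro continuous_intros cf cfA) force
  qed
  have Ine: "I \<noteq> {}" using I assms(5) by auto
  then obtain i0 where i0: "i0 \<in> I" by auto
  have finI: "finite I" using I finite_subset by blast
  have "J \<noteq> {}"
  proof
    assume "J = {}"
    then have "I = {1..N}" using I unfolding J_def N_def by auto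
    then show False using I assms(6) unfolding N_def by auto
  qed
  then obtain j0 where j0: "j0 \<in> J" by auto
  define T where "T = {1..N} - {i0, j0}"
  have i0N: "i0 \<in> {1..N}" using i0 I unfolding N_def by auto
  have j0N: "j0 \<in> {1..N}" and j0I: "j0 \<notin> I" using j0 unfolding J_def by auto
  have cardT: "card T = card (Basis :: 'd set)"
  proof -
    have "card T = card {1..N} - card {i0, j0}"
      unfolding T_def using i0N j0N by (intro card_Diff_subset) auto
    moreover have "card {i0, j0} = 2" using i0 j0I by (cases "i0 = j0") auto
    ultimately show ?thesis unfolding N_def by simp
  qed
  obtain e where e: "bij_betw e T (Basis :: 'd set)"
    using finite_same_card_bij[OF _ _ cardT] unfolding T_def by auto
  define r where "r t = (if t \<in> I then i0 else j0)" for t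
  have rN: "\<And>t. r t \<in> {1..N}" using i0N j0N unfolding r_def by auto
  define g where "g x = (\<Sum>t\<in>T. (u t x - u (r t) x) *\<^sub>R e t)" for x
  have TN: "T \<subseteq> {1..N}" unfolding T_def by auto
  have gcont: "continuous_on M g" unfolding g_def
  proof (intro continuous_on_sum continuous_on_scaleR continuous_on_diff continuous_on_const)
    fix t assume "t \<in> T"
    then show "continuous_on M (u t)" "continuous_on M (u (r t))" using ucont TN rN by auto
  qed
  have coord: "\<And>c s. s \<in> T \<Longrightarrow> (\<Sum>t\<in>T. c t *\<^sub>R e t) \<bullet> e s = c s"
  proof -
    fix c s assume s: "s \<in> T"
    have "(\<Sum>t\<in>T. c t *\<^sub>R e t) \<bullet> e s = (\<Sum>t\<in>T. c t * (e t \<bullet> e s))"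
      by (simp only: inner_sum_left inner_scaleR_left)
    also have "\<dots> = (\<Sum>t\<in>T. if t = s then c t else 0)"
    proof (rule sum.cong)
      fix t assume t: "t \<in> T"
      have "e t \<in> Basis" "e s \<in> Basis" using bij_betw_apply[OF e t] bij_betw_apply[OF e s] by simp_all
      moreover have "e t = e s \<longleftrightarrow> t = s" using bij_betw_imp_inj_on[OF e] t s by (meson inj_on_eq_iff)
      ultimately show "c t * (e t \<bullet> e s) = (if t = s then c t else 0)"
        using inner_Basis[of "e t" "e s"] by simp
    qed simp
    also have "\<dots> = c s"
    proof -
      have "finite T" unfolding T_def by simp
      then show ?thesis using s sum.delta'[of T s c] by simp
    qed
    finally show "(\<Sum>t\<in>T. c t *\<^sub>R e t) \<bullet> e s = c s" .
  qed
  obtain x where x: "x \<in> M" "g (A x) = g x" using BUT[OF gcont] by auto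
  have Ax: "A x \<in> M" using AM x by auto
  have equ: "\<And>t. t \<in> T \<Longrightarrow> u t x = u (r t) x"
  proof -
    fix t assume t: "t \<in> T"
    have "g (A x) \<bullet> e t = g x \<bullet> e t" using x by simp
    then have "u t (A x) - u (r t) (A x) = u t x - u (r t) x"
      unfolding g_def using coord[OF t] by simp
    then show "u t x = u (r t) x" using uA[OF _ x(1)] TN t rN by auto
  qed
  have uI: "\<And>i. i \<in> I \<Longrightarrow> u i x = u i0 x"
  proof -
    fix i assume i: "i \<in> I"
    show "u i x = u i0 x"
    proof (cases "i = i0")
      case False
      then have "i \<in> T" using i I j0I unfolding T_def N_def by auto
      then show ?thesis using equ i unfolding r_def by auto
    qed simp
  qed
  have uJ: "\<And>j. j \<in> J \<Longrightarrow> u j x = u j0 x"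
  proof -
    fix j assume j: "j \<in> J"
    show "u j x = u j0 x"
    proof (cases "j = j0")
      case False
      then have "j \<in> T" "j \<notin> I" using j i0 unfolding T_def J_def by auto
      then show ?thesis using equ unfolding r_def by auto
    qed simp
  qed
  have IJ: "\<And>l. l \<in> {1..N} \<Longrightarrow> l \<in> I \<or> l \<in> J" unfolding J_def by auto
  obtain l0 where l0: "l0 \<in> {1..N}" "x \<in> C l0" using assms(3) x(1) unfolding N_def by auto
  obtain l1 where l1: "l1 \<in> {1..N}" "A x \<in> C l1" using assms(3) Ax unfolding N_def by auto
  have z0: "u l0 x = 0" using u0[OF l0(1) x(1)] l0(2) by simp
  have z: "u i0 x = 0 \<or> u j0 x = 0"
  proof (cases "l0 \<in> I")
    case True then show ?thesis using uI[OF True] z0 by simp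
  next
    case False then have "l0 \<in> J" using IJ[OF l0(1)] by simp
    then show ?thesis using uJ z0 by simp
  qed
  have o1: "u l1 x = 1" using u1[OF l1(1) x(1)] l1(2) by simp
  have o: "u i0 x = 1 \<or> u j0 x = 1"
  proof (cases "l1 \<in> I")
    case True then show ?thesis using uI[OF True] o1 by simp
  next
    case False then have "l1 \<in> J" using IJ[OF l1(1)] by simp
    then show ?thesis using uJ o1 by simp
  qed
  have JN: "{1..DIM('d) + 2} - I = J" unfolding J_def N_def by simp
  have IN: "\<And>i. i \<in> I \<Longrightarrow> i \<in> {1..N}" using I unfolding N_def by auto
  have JN': "\<And>j. j \<in> J \<Longrightarrow> j \<in> {1..N}" unfolding J_def by auto
  have "\<exists>y\<in>M. (\<forall>i\<in>I. y \<in> C i) \<and> (\<forall>j\<in>J. A y \<in> C j)"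
  proof (cases "u i0 x = 0")
    case True
    then have "u j0 x = 1" using o by auto
    have "\<forall>i\<in>I. x \<in> C i"
    proof
      fix i assume i: "i \<in> I"
      show "x \<in> C i" using u0[OF IN[OF i] x(1)] uI[OF i] True by simp
    qed
    moreover have "\<forall>j\<in>J. A x \<in> C j"
    proof
      fix j assume j: "j \<in> J"
      show "A x \<in> C j" using u1[OF JN'[OF j] x(1)] uJ[OF j] \<open>u j0 x = 1\<close> by simp
    qed
    ultimately show ?thesis using x(1) by blast
  next
    case False
    then have "u j0 x = 0" "u i0 x = 1" using z o by auto
    have "\<forall>i\<in>I. A x \<in> C i"
    proof
      fix i assume i: "i \<in> I"
      show "A x \<in> C i" using u1[OF IN[OF i] x(1)] uI[OF i] \<open>u i0 x = 1\<close> by simp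
    qed
    moreover have "\<forall>j\<in>J. A (A x) \<in> C j"
    proof
      fix j assume j: "j \<in> J"
      show "A (A x) \<in> C j" using u0[OF JN'[OF j] x(1)] uJ[OF j] \<open>u j0 x = 0\<close> inv[OF x(1)] by simp
    qed
    ultimately show ?thesis using Ax by blast
  qed
  then show "(\<Inter>i\<in>I. C i) \<noteq> {} \<and>
           (\<exists>x\<in>M. (\<forall>i\<in>I. x \<in> C i) \<and> (\<forall>i\<in>{1..DIM('d) + 2} - I. A x \<in> C i))"
    unfolding JN by blast
qed

end
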